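(* Let $p\in(0,\infty)$ and let $f:\mathcal{W}_p(\mathcal{X})\to\mathcal{W}_p(\mathcal{X})$ be an isometric embedding, i.e. $W_p(f(\mu),f(\nu))=W_p(\mu,\nu)$ for all $\mu,\nu\in\mathcal{P}(\mathcal{X})$. Then there exists a unique family of measures $\Phi=(\varphi_{x,t})_{x\in\mathcal{X},\,t\in(0,1]}\in\mathcal{M}(\mathcal{X})^{\mathcal{X}\times(0,1]}$ satisfying (a) for all $x\neq y$: $S_{\varphi_{x,1}}\cap S_{\varphi_{y,1}}=\emptyset$; (b) for all $x\in\mathcal{X}$ and $0<t\le 1$: $\varphi_{x,t}(\mathcal{X})=t$; (c) for all $x\in\mathcal{X}$ and $0<s<t\le 1$: $\varphi_{x,s}\le\varphi_{x,t}$; and generating $f$ via $$f(\mu)=\sum_{x\in S_\mu}\varphi_{x,\mu(\{x\})}\qquad\text{for all }\mu\in\mathcal{P}(\mathcal{X}).$$ Conversely, every $\mathcal{X}\times(0,1]$-indexed family of measures in $\mathcal{M}(\mathcal{X})$ satisfying (a)–(c) generates an isometric embedding of $\mathcal{W}_p(\mathcal{X})$ via the formula $f(\mu)=\sum_{x\in S_\mu}\varphi_{x,\mu(\{x\})}$.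
   Context: Let $X$ be a countable set with at least two elements, equipped with the discrete metric $\rho$ ($\rho(x,y)=1$ if $x\neq y$, $\rho(x,x)=0$); write $\mathcal{X}=(X,\rho)$. $\mathcal{P}(\mathcal{X})$ and $\mathcal{M}(\mathcal{X})$ denote the probability measures and nonnegative finite measures on the power set of $\mathcal{X}$. For $\mu\in\mathcal{M}(\mathcal{X})$, $S_\mu=\{x\in\mathcal{X}:\mu(\{x\})>0\}$ is its support. For measures, $\alpha\le\beta$ means $\alpha(A)\le\beta(A)$ for all $A\subseteq\mathcal{X}$. For $\mu,\nu\in\mathcal{P}(\mathcal{X})$, a coupling is a probability measure $\pi$ on $\mathcal{X}^2$ with marginals $\mu,\nu$, and $W_p(\mu,\nu)=\big(\inf_\pi\int\rho^p\,d\pi\big)^{1/p}$ for $p\ge1$, $W_p(\mu,\nu)=\inf_\pi\int\rho^p\,d\pi$ for $0<p<1$. $\mathcal{W}_p(\mathcal{X})$ is the metric space $(\mathcal{P}(\mathcal{X}),W_p)$. An isometric embedding is a (not necessarily surjective) distance-preserving self-map of $\mathcal{W}_p(\mathcal{X})$. *)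

theory Defs
  imports "HOL-Probability.Probability"
begin

text \<open>The countable set X is the universe of a countable type 'a; probability measures on
  its power set are exactly the pmfs on 'a.  Finite nonnegative measures on the power set
  are represented by their (nonnegative, summable) point-mass functions 'a \<Rightarrow> real;
  the measure of a set A is the sum of the point masses over A.\<close>

definition rho :: "'a \<Rightarrow> 'a \<Rightarrow> real" where
  "rho x y = (if x = y then 0 else 1)"

definition is_coupling :: "'a pmf \<Rightarrow> 'a pmf \<Rightarrow> ('a \<times> 'a) pmf \<Rightarrow> bool" where
  "is_coupling \<mu> \<nu> \<pi> \<longleftrightarrow> map_pmf fst \<pi> = \<mu> \<and> map_pmf snd \<pi> = \<nu>"

definition transport_cost :: "real \<Rightarrow> ('a \<times> 'a) pmf \<Rightarrow> real" where
  "transport_cost p \<pi> = measure_pmf.expectation \<pi> (\<lambda>(x, y). rho x y powr p)"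

definition Wp :: "real \<Rightarrow> 'a pmf \<Rightarrow> 'a pmf \<Rightarrow> real" where
  "Wp p \<mu> \<nu> =
     (let c = Inf {transport_cost p \<pi> | \<pi>. is_coupling \<mu> \<nu> \<pi>}
      in if p \<ge> 1 then c powr (1 / p) else c)"

definition isometric_embedding :: "real \<Rightarrow> ('a pmf \<Rightarrow> 'a pmf) \<Rightarrow> bool" where
  "isometric_embedding p f \<longleftrightarrow> (\<forall>\<mu> \<nu>. Wp p (f \<mu>) (f \<nu>) = Wp p \<mu> \<nu>)"

definition finite_meas :: "('a \<Rightarrow> real) \<Rightarrow> bool" where
  "finite_meas \<alpha> \<longleftrightarrow> (\<forall>x. \<alpha> x \<ge> 0) \<and> \<alpha> summable_on UNIV"

definition meas :: "('a \<Rightarrow> real) \<Rightarrow> 'a set \<Rightarrow> real" where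
  "meas \<alpha> A = (\<Sum>\<^sub>\<infinity>x\<in>A. \<alpha> x)"

definition supp :: "('a \<Rightarrow> real) \<Rightarrow> 'a set" where
  "supp \<alpha> = {x. meas \<alpha> {x} > 0}"

definition meas_le :: "('a \<Rightarrow> real) \<Rightarrow> ('a \<Rightarrow> real) \<Rightarrow> bool" where
  "meas_le \<alpha> \<beta> \<longleftrightarrow> (\<forall>A. meas \<alpha> A \<le> meas \<beta> A)"

text \<open>Admissible families \<Phi> x t, indexed by x \<in> X and t \<in> (0,1] (values outside are irrelevant).\<close>
definition admissible_family :: "('a \<Rightarrow> real \<Rightarrow> 'a \<Rightarrow> real) \<Rightarrow> bool" where
  "admissible_family \<Phi> \<longleftrightarrow>
     (\<forall>x. \<forall>t\<in>{0<..1}. finite_meas (\<Phi> x t)) \<and>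
     (\<forall>x y. x \<noteq> y \<longrightarrow> supp (\<Phi> x 1) \<inter> supp (\<Phi> y 1) = {}) \<and>
     (\<forall>x. \<forall>t\<in>{0<..1}. meas (\<Phi> x t) UNIV = t) \<and>
     (\<forall>x s t. 0 < s \<and> s < t \<and> t \<le> 1 \<longrightarrow> meas_le (\<Phi> x s) (\<Phi> x t))"

definition generates :: "('a \<Rightarrow> real \<Rightarrow> 'a \<Rightarrow> real) \<Rightarrow> ('a pmf \<Rightarrow> 'a pmf) \<Rightarrow> bool" where
  "generates \<Phi> f \<longleftrightarrow>
     (\<forall>\<mu> A. measure_pmf.prob (f \<mu>) A =
        (\<Sum>\<^sub>\<infinity>x\<in>{x. measure_pmf.prob \<mu> {x} > 0}. meas (\<Phi> x (measure_pmf.prob \<mu> {x})) A))"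

end

theory Submission
  imports Defs
begin

lemma pmf_summable: "pmf \<mu> summable_on A"
proof -
  have "Infinite_Set_Sum.abs_summable_on (pmf \<mu>) A" by (rule pmf_abs_summable)
  then have "Infinite_Sum.abs_summable_on (pmf \<mu>) A" using abs_summable_equivalent by blast
  then show ?thesis using abs_summable_summable by blast
qed

lemma prob_infsum: "measure_pmf.prob \<mu> A = infsum (pmf \<mu>) A"
  by (simp add: measure_pmf_conv_infsetsum infsetsum_infsum pmf_abs_summable)

lemma embed_real:
  fixes f :: "'a \<Rightarrow> real"
  assumes "\<And>x. f x \<ge> 0" "f summable_on UNIV" "infsum f UNIV = 1"
  shows "pmf (embed_pmf f) x = f x"
proof -
  have "Infinite_Sum.abs_summable_on f UNIV" using assms(2) summable_on_iff_abs_summable_on_real by blast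
  then have ab: "Infinite_Set_Sum.abs_summable_on f UNIV" using abs_summable_equivalent by blast
  have "(\<integral>\<^sup>+ x. ennreal (f x) \<partial>count_space UNIV) = 1"
    using nn_integral_conv_infsetsum[OF ab] assms infsetsum_infsum[OF ab] by simp
  then show ?thesis using pmf_embed_pmf[of f] assms(1) by blast
qed

lemma infsum_single:
  fixes g :: "'b \<Rightarrow> real"
  assumes "\<And>z. z \<in> A \<Longrightarrow> z \<noteq> x0 \<Longrightarrow> g z = 0"
  shows "infsum g A = (if x0 \<in> A then g x0 else 0)"
proof -
  have "infsum g A = infsum g (A \<inter> {x0})"
    by (rule infsum_cong_neutral) (use assms in auto)
  then show ?thesis by (cases "x0 \<in> A") auto
qed

lemma meas_single: "meas \<alpha> {x} = \<alpha> x" by (simp add: meas_def)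
lemma supp_eq: "supp \<alpha> = {x. \<alpha> x > 0}" by (simp add: supp_def meas_single)

lemma summable_diff:
  fixes f g :: "'b \<Rightarrow> real"
  assumes "f summable_on A" "g summable_on A"
  shows "(\<lambda>x. f x - g x) summable_on A"
proof -
  have "(\<lambda>x. - g x) summable_on A" using assms(2) summable_on_uminus by blast
  from summable_on_add[OF assms(1) this] show ?thesis by simp
qed

lemma infsum_diff:
  fixes f g :: "'b \<Rightarrow> real"
  assumes "f summable_on A" "g summable_on A"
  shows "infsum (\<lambda>x. f x - g x) A = infsum f A - infsum g A"
proof -
  have "(\<lambda>x. - g x) summable_on A" using assms(2) summable_on_uminus by blast
  from infsum_add[OF assms(1) this] show ?thesis by (simp add: infsum_uminus)
qed

lemma sum_eq_le_imp_eq: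
  fixes f g :: "'b \<Rightarrow> real"
  assumes "f summable_on A" "g summable_on A" "\<And>x. x \<in> A \<Longrightarrow> f x \<le> g x"
    "infsum g A \<le> infsum f A" "x \<in> A"
  shows "f x = g x"
proof -
  have "(\<lambda>x. g x - f x) x = 0"
    apply (rule nonneg_infsum_le_0D[where A=A])
    using assms infsum_diff[OF assms(2,1)] summable_diff[OF assms(2,1)] by auto
  then show ?thesis by simp
qed

lemma comp_summable:
  fixes f g :: "'b \<Rightarrow> real"
  assumes "f summable_on A" "\<And>x. x \<in> A \<Longrightarrow> 0 \<le> g x" "\<And>x. x \<in> A \<Longrightarrow> g x \<le> f x"
  shows "g summable_on A"
  using summable_on_comparison_test[OF assms(1) assms(3) assms(2)] by blast

definition ov :: "'a pmf \<Rightarrow> 'a pmf \<Rightarrow> real" where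
  "ov \<mu> \<nu> = infsum (\<lambda>a. min (pmf \<mu> a) (pmf \<nu> a)) UNIV"

lemma min_summable: "(\<lambda>a. min (pmf \<mu> a) (pmf \<nu> a)) summable_on A"
  by (rule comp_summable[OF pmf_summable[of \<mu>]]) auto

lemma ov_nonneg: "ov \<mu> \<nu> \<ge> 0"
  unfolding ov_def by (rule infsum_nonneg) auto

lemma ov_le1: "ov \<mu> \<nu> \<le> 1"
proof -
  have "ov \<mu> \<nu> \<le> infsum (pmf \<mu>) UNIV"
    unfolding ov_def by (rule infsum_mono[OF min_summable pmf_summable]) auto
  also have "\<dots> = 1" using prob_infsum[of \<mu> UNIV] by simp
  finally show ?thesis .
qed

lemma diag_summable: "(\<lambda>a. pmf \<pi> (a, a)) summable_on UNIV"
proof -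
  have "pmf \<pi> summable_on ((\<lambda>a. (a,a)) ` UNIV)" by (rule pmf_summable)
  then show ?thesis by (subst (asm) summable_on_reindex) (auto simp: inj_on_def o_def)
qed

lemma cost_eq:
  assumes "p > 0"
  shows "transport_cost p \<pi> = 1 - infsum (\<lambda>a. pmf \<pi> (a, a)) UNIV"
proof -
  let ?D = "{z :: 'a \<times> 'a. fst z = snd z}"
  have "(\<lambda>(x, y). rho x y powr p) = indicator (- ?D)"
    using assms by (auto simp: rho_def fun_eq_iff split: split_indicator)
  then have "transport_cost p \<pi> = measure_pmf.prob \<pi> (- ?D)"
    unfolding transport_cost_def by simp
  also have "\<dots> = 1 - measure_pmf.prob \<pi> ?D"
    using measure_pmf.prob_compl[of ?D \<pi>] by (simp add: Compl_eq_Diff_UNIV)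
  also have "?D = (\<lambda>a. (a,a)) ` UNIV" by auto
  also have "measure_pmf.prob \<pi> \<dots> = infsum (\<lambda>a. pmf \<pi> (a, a)) UNIV"
    by (simp add: prob_infsum infsum_reindex inj_on_def o_def)
  finally show ?thesis .
qed

lemma coupling_diag_le:
  assumes "is_coupling \<mu> \<nu> \<pi>"
  shows "pmf \<pi> (a, a) \<le> min (pmf \<mu> a) (pmf \<nu> a)"
proof -
  have "pmf \<pi> (a,a) = measure_pmf.prob \<pi> {(a,a)}" by (simp add: measure_pmf_single)
  also have "\<dots> \<le> measure_pmf.prob \<pi> (fst -` {a})"
    by (rule measure_pmf.finite_measure_mono) auto
  also have "\<dots> = pmf \<mu> a" using assms by (auto simp: is_coupling_def pmf_map)
  finally have 1: "pmf \<pi> (a,a) \<le> pmf \<mu> a" .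
  have "measure_pmf.prob \<pi> {(a,a)} \<le> measure_pmf.prob \<pi> (snd -` {a})"
    by (rule measure_pmf.finite_measure_mono) auto
  also have "\<dots> = pmf \<nu> a" using assms by (auto simp: is_coupling_def pmf_map)
  finally have 2: "pmf \<pi> (a,a) \<le> pmf \<nu> a" by (simp add: measure_pmf_single)
  from 1 2 show ?thesis by simp
qed

lemma coupling_cost_ge:
  assumes "p > 0" "is_coupling \<mu> \<nu> \<pi>"
  shows "transport_cost p \<pi> \<ge> 1 - ov \<mu> \<nu>"
proof -
  have "infsum (\<lambda>a. pmf \<pi> (a, a)) UNIV \<le> ov \<mu> \<nu>"
    unfolding ov_def by (rule infsum_mono[OF diag_summable min_summable]) (use coupling_diag_le[OF assms(2)] in auto)
  then show ?thesis using cost_eq[OF assms(1), of \<pi>] by simp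
qed

lemma scaled_embed:
  fixes g :: "'a \<Rightarrow> real"
  assumes "\<And>x. g x \<ge> 0" "g summable_on UNIV" "infsum g UNIV = c"
  shows "c * pmf (embed_pmf (\<lambda>x. g x / c)) x = g x"
proof (cases "c = 0")
  case True
  have "g x = 0"
    by (rule nonneg_infsum_le_0D[where A=UNIV]) (use assms True in auto)
  then show ?thesis using True by simp
next
  case False
  have s: "(\<lambda>x. g x / c) summable_on UNIV"
    using summable_on_cmult_left[OF assms(2), of "1/c"] by simp
  have "infsum (\<lambda>x. g x / c) UNIV = 1"
    using infsum_cmult_left[of "1/c" g UNIV] assms False by simp
  then have "pmf (embed_pmf (\<lambda>x. g x / c)) x = g x / c"
    using embed_real[OF _ s] assms(1) False
    by (metis (no_types, lifting) assms(3) divide_nonneg_nonneg infsum_nonneg order_refl)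
  then show ?thesis using False by simp
qed

lemma coupling_exists:
  "\<exists>\<pi>. is_coupling \<mu> \<nu> \<pi> \<and> infsum (\<lambda>a. pmf \<pi> (a, a)) UNIV \<ge> ov \<mu> \<nu>"
proof -
  define c where "c = ov \<mu> \<nu>"
  define m where "m = (\<lambda>a. min (pmf \<mu> a) (pmf \<nu> a))"
  define r1 where "r1 = (\<lambda>a. pmf \<mu> a - m a)"
  define r2 where "r2 = (\<lambda>a. pmf \<nu> a - m a)"
  define M where "M = embed_pmf (\<lambda>a. m a / c)"
  define R1 where "R1 = embed_pmf (\<lambda>a. r1 a / (1 - c))"
  define R2 where "R2 = embed_pmf (\<lambda>a. r2 a / (1 - c))"
  have c01: "0 \<le> c" "c \<le> 1" using ov_nonneg ov_le1 c_def by auto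
  have ms: "m summable_on UNIV" unfolding m_def by (rule min_summable)
  have mM: "c * pmf M a = m a" for a
    unfolding M_def by (rule scaled_embed) (use ms in \<open>auto simp: m_def c_def ov_def\<close>)
  have p1: "infsum (pmf \<mu>) UNIV = 1" "infsum (pmf \<nu>) UNIV = 1"
    using prob_infsum[of _ UNIV] by auto
  have r1M: "(1 - c) * pmf R1 a = r1 a" for a
    unfolding R1_def apply (rule scaled_embed)
    using ms p1 summable_diff[OF pmf_summable ms] infsum_diff[OF pmf_summable ms]
    by (auto simp: r1_def m_def c_def ov_def)
  have r2M: "(1 - c) * pmf R2 a = r2 a" for a
    unfolding R2_def apply (rule scaled_embed)
    using ms p1 summable_diff[OF pmf_summable ms] infsum_diff[OF pmf_summable ms]
    by (auto simp: r2_def m_def c_def ov_def)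
  define \<pi> where "\<pi> = bind_pmf (bernoulli_pmf c) (\<lambda>b. if b then map_pmf (\<lambda>x. (x,x)) M else pair_pmf R1 R2)"
  have f1: "map_pmf fst \<pi> = bind_pmf (bernoulli_pmf c) (\<lambda>b. if b then M else R1)"
    unfolding \<pi>_def map_bind_pmf by (rule bind_pmf_cong) (auto simp: map_pmf_comp map_fst_pair_pmf)
  have f2: "map_pmf snd \<pi> = bind_pmf (bernoulli_pmf c) (\<lambda>b. if b then M else R2)"
    unfolding \<pi>_def map_bind_pmf by (rule bind_pmf_cong) (auto simp: map_pmf_comp map_snd_pair_pmf)
  have "map_pmf fst \<pi> = \<mu>"
    unfolding f1 by (rule pmf_eqI) (use c01 mM r1M in \<open>auto simp: pmf_bind r1_def algebra_simps\<close>)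
  moreover have "map_pmf snd \<pi> = \<nu>"
    unfolding f2 by (rule pmf_eqI) (use c01 mM r2M in \<open>auto simp: pmf_bind r2_def algebra_simps\<close>)
  moreover have "pmf \<pi> (a, a) \<ge> m a" for a
  proof -
    have "pmf \<pi> (a, a) = pmf M a * c + pmf (pair_pmf R1 R2) (a, a) * (1 - c)"
      unfolding \<pi>_def using c01 pmf_map_inj'[of "\<lambda>x. (x,x)" M a] by (simp add: pmf_bind inj_on_def)
    also have "\<dots> \<ge> pmf M a * c" using c01 by simp
    finally show ?thesis using mM[of a] by (simp add: mult.commute)
  qed
  then have "infsum (\<lambda>a. pmf \<pi> (a, a)) UNIV \<ge> ov \<mu> \<nu>"
    unfolding ov_def by (intro infsum_mono[OF min_summable diag_summable]) (auto simp: m_def)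
  ultimately show ?thesis unfolding is_coupling_def by blast
qed

lemma Inf_cost:
  assumes "p > 0"
  shows "Inf {transport_cost p \<pi> | \<pi>. is_coupling \<mu> \<nu> \<pi>} = 1 - ov \<mu> \<nu>"
proof -
  obtain \<pi> where \<pi>: "is_coupling \<mu> \<nu> \<pi>" "infsum (\<lambda>a. pmf \<pi> (a, a)) UNIV \<ge> ov \<mu> \<nu>"
    using coupling_exists by blast
  have e: "transport_cost p \<pi> = 1 - ov \<mu> \<nu>"
    using cost_eq[OF assms, of \<pi>] \<pi> coupling_cost_ge[OF assms \<pi>(1)] by simp
  show ?thesis
  proof (rule cInf_eq_minimum)
    show "1 - ov \<mu> \<nu> \<in> {transport_cost p \<pi> | \<pi>. is_coupling \<mu> \<nu> \<pi>}"
      using \<pi>(1) e by force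
  qed (use coupling_cost_ge[OF assms] in auto)
qed

lemma Wp_eq:
  assumes "p > 0"
  shows "Wp p \<mu> \<nu> = (if p \<ge> 1 then (1 - ov \<mu> \<nu>) powr (1/p) else 1 - ov \<mu> \<nu>)"
  unfolding Wp_def Let_def Inf_cost[OF assms] ..

lemma iso_iff:
  assumes "p > 0"
  shows "isometric_embedding p f \<longleftrightarrow> (\<forall>\<mu> \<nu>. ov (f \<mu>) (f \<nu>) = ov \<mu> \<nu>)"
proof -
  have inj: "(if p \<ge> 1 then x powr (1/p) else x) = (if p \<ge> 1 then y powr (1/p) else y) \<longleftrightarrow> x = y"
    if "x \<ge> 0" "y \<ge> 0" for x y :: real
  proof (cases "p \<ge> 1")
    case True
    have "(z powr (1/p)) powr p = z" if "z \<ge> 0" for z :: real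
      using assms that by (simp add: powr_powr)
    then have "x powr (1/p) = y powr (1/p) \<Longrightarrow> x = y" using that by metis
    then show ?thesis using True by auto
  qed auto
  have e: "(if p \<ge> 1 then (1 - ov (f \<mu>) (f \<nu>)) powr (1/p) else 1 - ov (f \<mu>) (f \<nu>)) =
     (if p \<ge> 1 then (1 - ov \<mu> \<nu>) powr (1/p) else 1 - ov \<mu> \<nu>) \<longleftrightarrow> ov (f \<mu>) (f \<nu>) = ov \<mu> \<nu>" for \<mu> \<nu>
    using inj[of "1 - ov (f \<mu>) (f \<nu>)" "1 - ov \<mu> \<nu>"] ov_le1[of "f \<mu>" "f \<nu>"] ov_le1[of \<mu> \<nu>] by linarith
  show ?thesis unfolding isometric_embedding_def Wp_eq[OF assms] e ..
qed


lemma fin_sum_bound: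
  fixes F :: "'x \<Rightarrow> 'b \<Rightarrow> real"
  assumes nn: "\<And>x a. F x a \<ge> 0" and s: "\<And>x. F x summable_on UNIV"
    and S: "(\<lambda>x. infsum (F x) UNIV) summable_on UNIV" and T: "finite T"
  shows "sum (\<lambda>(x,a). F x a) T \<le> infsum (\<lambda>x. infsum (F x) UNIV) UNIV"
proof -
  have "sum (\<lambda>(x,a). F x a) T \<le> sum (\<lambda>(x,a). F x a) (fst ` T \<times> snd ` T)"
    by (rule sum_mono2) (use T nn in \<open>auto simp: case_prod_beta intro: rev_image_eqI\<close>)
  also have "\<dots> = (\<Sum>x\<in>fst ` T. \<Sum>a\<in>snd ` T. F x a)"
    by (rule sum.cartesian_product[symmetric])
  also have "\<dots> \<le> (\<Sum>x\<in>fst ` T. infsum (F x) UNIV)"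
    by (rule sum_mono, rule finite_sum_le_infsum) (use s T nn in auto)
  also have "\<dots> \<le> infsum (\<lambda>x. infsum (F x) UNIV) UNIV"
    by (rule finite_sum_le_infsum) (use S T nn in \<open>auto intro: infsum_nonneg\<close>)
  finally show ?thesis .
qed

lemma swap_nonneg:
  fixes F :: "'x \<Rightarrow> 'b \<Rightarrow> real"
  assumes nn: "\<And>x a. F x a \<ge> 0" and s: "\<And>x. F x summable_on UNIV"
    and S: "(\<lambda>x. infsum (F x) UNIV) summable_on UNIV"
  shows "infsum (\<lambda>a. infsum (\<lambda>x. F x a) UNIV) A = infsum (\<lambda>x. infsum (F x) A) UNIV"
    and "(\<lambda>a. infsum (\<lambda>x. F x a) UNIV) summable_on A"
proof -
  have s2: "(\<lambda>(a,x). F x a) summable_on (A \<times> UNIV)"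
  proof (rule nonneg_bdd_above_summable_on)
    show "bdd_above (sum (\<lambda>(a,x). F x a) ` {T. T \<subseteq> A \<times> UNIV \<and> finite T})"
    proof (rule bdd_aboveI2)
      fix T :: "('b \<times> 'x) set" assume "T \<in> {T. T \<subseteq> A \<times> UNIV \<and> finite T}"
      then have T: "finite T" by auto
      have "sum (\<lambda>(a,x). F x a) T = sum (\<lambda>(x,a). F x a) (prod.swap ` T)"
        by (subst sum.reindex) (auto simp: case_prod_beta)
      also have "\<dots> \<le> infsum (\<lambda>x. infsum (F x) UNIV) UNIV"
        by (rule fin_sum_bound[OF nn s S]) (use T in auto)
      finally show "sum (\<lambda>(a,x). F x a) T \<le> infsum (\<lambda>x. infsum (F x) UNIV) UNIV" .
    qed
  qed (use nn in auto)
  show "infsum (\<lambda>a. infsum (\<lambda>x. F x a) UNIV) A = infsum (\<lambda>x. infsum (F x) A) UNIV"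
    using infsum_swap_banach[of "\<lambda>a x. F x a" A UNIV] s2 by simp
  show "(\<lambda>a. infsum (\<lambda>x. F x a) UNIV) summable_on A"
    using summable_on_Sigma_banach[of "\<lambda>a x. F x a" A "\<lambda>_. UNIV"] s2 by simp
qed


locale adm =
  fixes \<Phi> :: "'a \<Rightarrow> real \<Rightarrow> 'a \<Rightarrow> real"
  assumes adm: "admissible_family \<Phi>"
begin

lemma fm: "0 < t \<Longrightarrow> t \<le> 1 \<Longrightarrow> finite_meas (\<Phi> x t)"
  using adm unfolding admissible_family_def by auto

lemma nn: "0 < t \<Longrightarrow> t \<le> 1 \<Longrightarrow> \<Phi> x t a \<ge> 0"
  using fm unfolding finite_meas_def by blast

lemma sm: "0 < t \<Longrightarrow> t \<le> 1 \<Longrightarrow> \<Phi> x t summable_on UNIV"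
  using fm unfolding finite_meas_def by blast

lemma mass: "0 < t \<Longrightarrow> t \<le> 1 \<Longrightarrow> infsum (\<Phi> x t) UNIV = t"
  using adm unfolding admissible_family_def meas_def by auto

lemma mono: "0 < s \<Longrightarrow> s \<le> t \<Longrightarrow> t \<le> 1 \<Longrightarrow> \<Phi> x s a \<le> \<Phi> x t a"
proof (cases "s = t")
  case False
  assume "0 < s" "s \<le> t" "t \<le> 1"
  then have "meas_le (\<Phi> x s) (\<Phi> x t)" using adm False unfolding admissible_family_def by auto
  then show ?thesis unfolding meas_le_def using meas_single by metis
qed auto

lemma disj: "x \<noteq> y \<Longrightarrow> \<Phi> x 1 a = 0 \<or> \<Phi> y 1 a = 0"
proof -
  assume "x \<noteq> y"
  then have "supp (\<Phi> x 1) \<inter> supp (\<Phi> y 1) = {}" using adm unfolding admissible_family_def by auto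
  show ?thesis
  proof (rule ccontr)
    assume "\<not> (\<Phi> x 1 a = 0 \<or> \<Phi> y 1 a = 0)"
    then have "a \<in> supp (\<Phi> x 1) \<inter> supp (\<Phi> y 1)"
      using nn[of 1 x a] nn[of 1 y a] unfolding supp_eq by auto
    then show False using \<open>supp (\<Phi> x 1) \<inter> supp (\<Phi> y 1) = {}\<close> by blast
  qed
qed

definition \<psi> where "\<psi> x t a = (if 0 < t then \<Phi> x t a else 0)"

lemma \<psi>_pos: "0 < t \<Longrightarrow> \<psi> x t = \<Phi> x t" by (auto simp: \<psi>_def)
lemma \<psi>_nn: "t \<le> 1 \<Longrightarrow> \<psi> x t a \<ge> 0" unfolding \<psi>_def using nn by auto
lemma \<psi>_sm: "t \<le> 1 \<Longrightarrow> \<psi> x t summable_on UNIV"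
  unfolding \<psi>_def using sm by (cases "0 < t") auto
lemma \<psi>_mass: "0 \<le> t \<Longrightarrow> t \<le> 1 \<Longrightarrow> infsum (\<psi> x t) UNIV = t"
  unfolding \<psi>_def using mass by (cases "0 < t") auto
lemma \<psi>_mono: "s \<le> t \<Longrightarrow> t \<le> 1 \<Longrightarrow> \<psi> x s a \<le> \<psi> x t a"
  unfolding \<psi>_def using mono nn by auto
lemma \<psi>_le1: "t \<le> 1 \<Longrightarrow> \<psi> x t a \<le> \<Phi> x 1 a"
  using \<psi>_mono[of t 1 x a] by (simp add: \<psi>_def)
lemma \<psi>_min: "s \<le> 1 \<Longrightarrow> t \<le> 1 \<Longrightarrow> min (\<psi> x s a) (\<psi> x t a) = \<psi> x (min s t) a"
  using \<psi>_mono[of s t x a] \<psi>_mono[of t s x a] by (cases "s \<le> t") (auto simp: min_def)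

lemma owner: "\<exists>x0. \<forall>x t. x \<noteq> x0 \<longrightarrow> t \<le> 1 \<longrightarrow> \<psi> x t a = 0"
proof (cases "\<exists>x0. \<Phi> x0 1 a \<noteq> 0")
  case True
  then obtain x0 where x0: "\<Phi> x0 1 a \<noteq> 0" by blast
  show ?thesis
  proof (intro exI allI impI)
    fix x t assume "x \<noteq> x0" "t \<le> (1::real)"
    then have "\<Phi> x 1 a = 0" using disj[of x x0 a] x0 by auto
    then show "\<psi> x t a = 0" using \<psi>_le1[of t x a] \<psi>_nn[of t x a] \<open>t \<le> 1\<close> by auto
  qed
next
  case False
  show ?thesis
  proof (intro exI allI impI)
    fix x t assume "t \<le> (1::real)"
    then show "\<psi> x t a = 0" using \<psi>_le1[of t x a] \<psi>_nn[of t x a] False by auto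
  qed
qed

definition G where "G w a = infsum (\<lambda>x. \<psi> x (w x) a) UNIV"

lemma G_single:
  assumes "\<forall>x. w x \<le> 1"
  shows "\<exists>x0. \<forall>w. (\<forall>x. w x \<le> 1) \<longrightarrow> G w a = \<psi> x0 (w x0) a"
proof -
  obtain x0 where x0: "\<forall>x t. x \<noteq> x0 \<longrightarrow> t \<le> 1 \<longrightarrow> \<psi> x t a = 0" using owner by blast
  show ?thesis
  proof (intro exI[of _ x0] allI impI)
    fix w :: "'a \<Rightarrow> real" assume w: "\<forall>x. w x \<le> 1"
    have "G w a = (if x0 \<in> UNIV then \<psi> x0 (w x0) a else 0)"
      unfolding G_def by (rule infsum_single) (use x0 w in auto)
    then show "G w a = \<psi> x0 (w x0) a" by simp
  qed
qed

lemma G_sum: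
  assumes "\<And>x. 0 \<le> w x" "\<And>x. w x \<le> 1" "w summable_on UNIV"
  shows "infsum (G w) A = infsum (\<lambda>x. meas (\<psi> x (w x)) A) UNIV" "G w summable_on A"
proof -
  have S: "(\<lambda>x. infsum (\<psi> x (w x)) UNIV) summable_on UNIV"
    using assms \<psi>_mass by simp
  show "infsum (G w) A = infsum (\<lambda>x. meas (\<psi> x (w x)) A) UNIV"
    unfolding G_def meas_def
    by (rule swap_nonneg(1)[of "\<lambda>x a. \<psi> x (w x) a", OF _ _ S]) (use assms \<psi>_nn \<psi>_sm in auto)
  show "G w summable_on A"
    unfolding G_def
    by (rule swap_nonneg(2)[of "\<lambda>x a. \<psi> x (w x) a", OF _ _ S]) (use assms \<psi>_nn \<psi>_sm in auto)
qed

lemma G_total: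
  assumes "\<And>x. 0 \<le> w x" "\<And>x. w x \<le> 1" "w summable_on UNIV"
  shows "infsum (G w) UNIV = infsum w UNIV"
  using G_sum(1)[OF assms, of UNIV] assms \<psi>_mass by (simp add: meas_def)

lemma G_nn: assumes h: "\<And>x. w x \<le> 1" shows "G w a \<ge> 0"
  unfolding G_def by (rule infsum_nonneg) (rule \<psi>_nn[OF h])

lemma pmf_le1: "pmf \<mu> x \<le> 1" by (rule pmf_le_1)

definition F where "F \<mu> = embed_pmf (G (pmf \<mu>))"

lemma pmf_F: "pmf (F \<mu>) = G (pmf \<mu>)"
proof
  fix a
  show "pmf (F \<mu>) a = G (pmf \<mu>) a"
    unfolding F_def
  proof (rule embed_real)
    show "0 \<le> G (pmf \<mu>) x" for x by (rule G_nn) (rule pmf_le1)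
    show "G (pmf \<mu>) summable_on UNIV" using G_sum(2)[of "pmf \<mu>" UNIV, OF pmf_nonneg pmf_le1 pmf_summable] .
    show "infsum (G (pmf \<mu>)) UNIV = 1"
      using G_total[of "pmf \<mu>", OF pmf_nonneg pmf_le1 pmf_summable] prob_infsum[of \<mu> UNIV] by simp
  qed
qed

lemma gen: "generates \<Phi> F"
  unfolding generates_def
proof (intro allI)
  fix \<mu> A
  have "measure_pmf.prob (F \<mu>) A = infsum (\<lambda>x. meas (\<psi> x (pmf \<mu> x)) A) UNIV"
    unfolding prob_infsum pmf_F
    by (rule G_sum(1)[OF pmf_nonneg pmf_le1 pmf_summable])
  also have "\<dots> = infsum (\<lambda>x. meas (\<psi> x (pmf \<mu> x)) A) {x. pmf \<mu> x > 0}"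
    by (rule infsum_cong_neutral) (auto simp: \<psi>_def meas_def pmf_nonneg order.order_iff_strict)
  also have "\<dots> = (\<Sum>\<^sub>\<infinity>x\<in>{x. measure_pmf.prob \<mu> {x} > 0}. meas (\<Phi> x (measure_pmf.prob \<mu> {x})) A)"
    unfolding measure_pmf_single by (rule infsum_cong) (auto simp: \<psi>_pos)
  finally show "measure_pmf.prob (F \<mu>) A =
      (\<Sum>\<^sub>\<infinity>x\<in>{x. measure_pmf.prob \<mu> {x} > 0}. meas (\<Phi> x (measure_pmf.prob \<mu> {x})) A)" .
qed

lemma iso: "ov (F \<mu>) (F \<nu>) = ov \<mu> \<nu>"
proof -
  let ?w = "\<lambda>x. min (pmf \<mu> x) (pmf \<nu> x)"
  have "min (G (pmf \<mu>) a) (G (pmf \<nu>) a) = G ?w a" for a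
  proof -
    have h1: "\<forall>x. pmf \<mu> x \<le> 1" by (simp add: pmf_le1)
    have h2: "\<forall>x. pmf \<nu> x \<le> 1" by (simp add: pmf_le1)
    have h3: "\<forall>x. ?w x \<le> 1" by (simp add: pmf_le1 min_le_iff_disj)
    obtain x0 where x0: "\<forall>w. (\<forall>x. w x \<le> 1) \<longrightarrow> G w a = \<psi> x0 (w x0) a"
      using G_single[OF h1] by blast
    have "G (pmf \<mu>) a = \<psi> x0 (pmf \<mu> x0) a" "G (pmf \<nu>) a = \<psi> x0 (pmf \<nu> x0) a"
      "G ?w a = \<psi> x0 (?w x0) a"
      using x0[THEN spec, THEN mp, OF h1] x0[THEN spec, THEN mp, OF h2] x0[THEN spec, THEN mp, OF h3] by auto
    then show ?thesis using \<psi>_min[OF pmf_le1 pmf_le1] by simp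
  qed
  then have "ov (F \<mu>) (F \<nu>) = infsum (G ?w) UNIV"
    unfolding ov_def pmf_F by simp
  also have "\<dots> = infsum ?w UNIV"
    by (rule G_total[OF _ _ min_summable]) (simp_all add: pmf_le1 min_le_iff_disj)
  finally show ?thesis unfolding ov_def .
qed

end

lemma converse:
  assumes "p > 0" "admissible_family \<Phi>"
  shows "\<exists>f. generates \<Phi> f \<and> isometric_embedding p f"
proof -
  interpret adm \<Phi> by standard fact
  show ?thesis using gen iso iso_iff[OF assms(1)] by blast
qed


lemma ex_pmf:
  fixes x :: 'a
  assumes "y \<noteq> x" "0 \<le> t" "t \<le> 1"
  shows "\<exists>\<mu>. pmf \<mu> x = t"
proof -
  have "pmf (map_pmf (\<lambda>b. if b then x else y) (bernoulli_pmf t)) x = measure_pmf.prob (bernoulli_pmf t) {True}"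
  proof -
    have "(\<lambda>b. if b then x else y) -` {x} = {True}" using assms(1) by (auto split: if_splits)
    then show ?thesis unfolding pmf_map by simp
  qed
  also have "\<dots> = t" using assms by (simp add: measure_pmf_single)
  finally show ?thesis by blast
qed

lemma ov_dirac: "ov \<mu> (return_pmf x) = pmf \<mu> x"
proof -
  have "ov \<mu> (return_pmf x) = (if x \<in> UNIV then min (pmf \<mu> x) (indicator {x} x) else 0)"
    unfolding ov_def pmf_return by (rule infsum_single) (auto simp: indicator_def)
  then show ?thesis by (simp add: pmf_le_1)
qed

context adm
begin

lemma le1: "0 < t \<Longrightarrow> t \<le> 1 \<Longrightarrow> \<Phi> x t a \<le> \<Phi> x 1 a"
  using mono[of t 1 x a] by simp

lemma uniq_formula:
  assumes g: "generates \<Phi> f" and y: "y \<noteq> x" and t: "0 < t" "t \<le> 1"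
  shows "\<Phi> x t a = (if pmf (f (return_pmf x)) a > 0 then pmf (f (SOME \<mu>. pmf \<mu> x = t)) a else 0)"
proof -
  have gp: "pmf (f \<mu>) a = infsum (\<lambda>z. \<Phi> z (pmf \<mu> z) a) {z. pmf \<mu> z > 0}" for \<mu>
  proof -
    have "measure_pmf.prob (f \<mu>) {a} = (\<Sum>\<^sub>\<infinity>x\<in>{x. measure_pmf.prob \<mu> {x} > 0}. meas (\<Phi> x (measure_pmf.prob \<mu> {x})) {a})"
      using g unfolding generates_def by blast
    then show ?thesis by (simp only: measure_pmf_single meas_single)
  qed
  have d: "pmf (f (return_pmf x)) a = \<Phi> x 1 a"
  proof -
    have "{z. pmf (return_pmf x) z > 0} = {x}" by (auto simp: indicator_def)
    then show ?thesis using gp[of "return_pmf x"] by simp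
  qed
  define \<mu> where "\<mu> = (SOME \<mu>. pmf \<mu> x = t)"
  have \<mu>x: "pmf \<mu> x = t" unfolding \<mu>_def by (rule someI_ex) (rule ex_pmf[OF y]; use t in auto)
  show ?thesis
  proof (cases "\<Phi> x 1 a > 0")
    case True
    have "pmf (f \<mu>) a = (if x \<in> {z. pmf \<mu> z > 0} then \<Phi> x (pmf \<mu> x) a else 0)"
      unfolding gp
    proof (rule infsum_single)
      fix z assume z: "z \<in> {z. pmf \<mu> z > 0}" "z \<noteq> x"
      then have "\<Phi> z 1 a = 0" using disj[of z x a] True by auto
      then show "\<Phi> z (pmf \<mu> z) a = 0"
        using le1[of "pmf \<mu> z" z a] nn[of "pmf \<mu> z" z a] z pmf_le_1[of \<mu> z] by auto
    qed
    then show ?thesis using True d \<mu>x t by (simp add: \<mu>_def)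
  next
    case False
    then have "\<Phi> x 1 a = 0" using nn[of 1 x a] by simp
    then have "\<Phi> x t a = 0" using le1[OF t, of x a] nn[OF t, of x a] by simp
    then show ?thesis using d False by simp
  qed
qed

end


locale isoL =
  fixes f :: "'a pmf \<Rightarrow> 'a pmf"
  assumes ovp: "\<And>\<mu> \<nu>. ov (f \<mu>) (f \<nu>) = ov \<mu> \<nu>"
    and two: "\<And>x::'a. \<exists>y. y \<noteq> x"
begin

abbreviation P where "P \<mu> \<equiv> pmf (f \<mu>)"
abbreviation \<delta> where "\<delta> x \<equiv> return_pmf x"

lemma F1: "x \<noteq> y \<Longrightarrow> P (\<delta> x) a = 0 \<or> P (\<delta> y) a = 0"
proof -
  assume xy: "x \<noteq> y"
  have "ov (\<delta> x) (\<delta> y) = 0" using xy by (simp add: ov_dirac)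
  then have "ov (f (\<delta> x)) (f (\<delta> y)) = 0" using ovp by simp
  then have "(\<lambda>a. min (P (\<delta> x) a) (P (\<delta> y) a)) a = 0"
    by (intro nonneg_infsum_le_0D[where A=UNIV]) (auto simp: ov_def min_summable)
  then show ?thesis by (simp add: min_def split: if_splits)
qed

lemma owner: "\<exists>x0. \<forall>x. x \<noteq> x0 \<longrightarrow> P (\<delta> x) a = 0"
proof (cases "\<exists>x0. P (\<delta> x0) a \<noteq> 0")
  case True
  then obtain x0 where "P (\<delta> x0) a \<noteq> 0" by blast
  then show ?thesis using F1 by blast
next
  case False
  then show ?thesis by blast
qed

lemma F2: "infsum (\<lambda>a. min (P \<mu> a) (P (\<delta> x) a)) UNIV = pmf \<mu> x"
  using ovp[of \<mu> "\<delta> x"] ov_dirac[of \<mu> x] unfolding ov_def by simp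

lemma F3: "P \<mu> a = infsum (\<lambda>x. min (P \<mu> a) (P (\<delta> x) a)) UNIV"
proof -
  define h where "h a = infsum (\<lambda>x. min (P \<mu> a) (P (\<delta> x) a)) UNIV" for a
  have S: "(\<lambda>x. infsum (\<lambda>a. min (P \<mu> a) (P (\<delta> x) a)) UNIV) summable_on UNIV"
    unfolding F2 by (rule pmf_summable)
  have hs: "h summable_on UNIV" unfolding h_def
    by (rule swap_nonneg(2)[of "\<lambda>x a. min (P \<mu> a) (P (\<delta> x) a)", OF _ _ S]) (auto intro: min_summable)
  have "infsum h UNIV = infsum (\<lambda>x. infsum (\<lambda>a. min (P \<mu> a) (P (\<delta> x) a)) UNIV) UNIV"
    unfolding h_def
    by (rule swap_nonneg(1)[of "\<lambda>x a. min (P \<mu> a) (P (\<delta> x) a)", OF _ _ S]) (auto intro: min_summable)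
  also have "\<dots> = 1" unfolding F2 using prob_infsum[of \<mu> UNIV] by simp
  finally have h1: "infsum h UNIV = 1" .
  have hle: "h a \<le> P \<mu> a" for a
  proof -
    obtain x0 where x0: "\<forall>x. x \<noteq> x0 \<longrightarrow> P (\<delta> x) a = 0" using owner by blast
    have "h a = (if x0 \<in> UNIV then min (P \<mu> a) (P (\<delta> x0) a) else 0)"
      unfolding h_def by (rule infsum_single) (use x0 in auto)
    then show ?thesis by simp
  qed
  have "h a = P \<mu> a"
    by (rule sum_eq_le_imp_eq[OF hs pmf_summable]) (use hle h1 prob_infsum[of "f \<mu>" UNIV] in auto)
  then show ?thesis by (simp add: h_def)
qed

lemma F3a: "P (\<delta> x0) a > 0 \<Longrightarrow> P \<mu> a \<le> P (\<delta> x0) a"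
proof -
  assume pos: "P (\<delta> x0) a > 0"
  have x0: "\<forall>x. x \<noteq> x0 \<longrightarrow> P (\<delta> x) a = 0" using F1 pos by fastforce
  have "infsum (\<lambda>x. min (P \<mu> a) (P (\<delta> x) a)) UNIV = (if x0 \<in> UNIV then min (P \<mu> a) (P (\<delta> x0) a) else 0)"
    by (rule infsum_single) (use x0 in auto)
  then have "P \<mu> a = min (P \<mu> a) (P (\<delta> x0) a)" using F3[of \<mu> a] by simp
  then show ?thesis by (metis min.cobounded2)
qed

lemma F3b: "(\<forall>x. P (\<delta> x) a = 0) \<Longrightarrow> P \<mu> a = 0"
  using F3[of \<mu> a] by simp

definition blk where "blk \<mu> x a = (if P (\<delta> x) a > 0 then P \<mu> a else 0)"

lemma blk_min: "blk \<mu> x a = min (P \<mu> a) (P (\<delta> x) a)"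
proof (cases "P (\<delta> x) a > 0")
  case True then show ?thesis using F3a[OF True, of \<mu>] by (simp add: blk_def)
next
  case False then have "P (\<delta> x) a = 0" using pmf_nonneg[of "f (\<delta> x)" a] by linarith
  then show ?thesis by (simp add: blk_def)
qed

lemma blk_nn: "blk \<mu> x a \<ge> 0" by (simp add: blk_def)
lemma blk_le: "blk \<mu> x a \<le> P \<mu> a" by (simp add: blk_def)
lemma blk_sm: "blk \<mu> x summable_on A"
  by (rule comp_summable[OF pmf_summable]) (auto simp: blk_def)
lemma blk_mass: "infsum (blk \<mu> x) UNIV = pmf \<mu> x"
  unfolding blk_min using F2 by simp

lemma blk_sum: "infsum (\<lambda>x. g (blk \<mu> x a) (blk \<nu> x a)) UNIV = g (P \<mu> a) (P \<nu> a)"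
  if g0: "g 0 0 = 0" for g :: "real \<Rightarrow> real \<Rightarrow> real"
proof (cases "\<exists>x0. P (\<delta> x0) a > 0")
  case True
  then obtain x0 where pos: "P (\<delta> x0) a > 0" by blast
  have x0: "\<forall>x. x \<noteq> x0 \<longrightarrow> P (\<delta> x) a = 0" using F1 pos by fastforce
  have "infsum (\<lambda>x. g (blk \<mu> x a) (blk \<nu> x a)) UNIV = (if x0 \<in> UNIV then g (blk \<mu> x0 a) (blk \<nu> x0 a) else 0)"
    by (rule infsum_single) (use x0 g0 in \<open>auto simp: blk_def\<close>)
  then show ?thesis using pos by (simp add: blk_def)
next
  case False
  then have z: "\<forall>x. P (\<delta> x) a = 0" using pmf_nonneg by (metis less_eq_real_def)
  then have "P \<mu> a = 0" "P \<nu> a = 0" using F3b by auto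
  then show ?thesis using False g0 by (simp add: blk_def)
qed

lemma F5: "infsum (\<lambda>a. min (blk \<mu> x a) (blk \<nu> x a)) UNIV = min (pmf \<mu> x) (pmf \<nu> x)"
proof -
  define F where "F x a = min (blk \<mu> x a) (blk \<nu> x a)" for x a
  have Fnn: "F x a \<ge> 0" for x a by (simp add: F_def blk_nn)
  have Fsm: "F x summable_on A" for x A
    by (rule comp_summable[OF pmf_summable[of "f \<mu>"]]) (auto simp: F_def blk_nn blk_le min.coboundedI1)
  have Fle: "infsum (F x) UNIV \<le> min (pmf \<mu> x) (pmf \<nu> x)" for x
  proof -
    have "infsum (F x) UNIV \<le> infsum (blk \<mu> x) UNIV"
      by (rule infsum_mono[OF Fsm blk_sm]) (simp add: F_def)
    moreover have "infsum (F x) UNIV \<le> infsum (blk \<nu> x) UNIV"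
      by (rule infsum_mono[OF Fsm blk_sm]) (simp add: F_def)
    ultimately show ?thesis by (simp add: blk_mass)
  qed
  have Snn: "infsum (F x) UNIV \<ge> 0" for x by (rule infsum_nonneg) (simp add: Fnn)
  have S: "(\<lambda>x. infsum (F x) UNIV) summable_on UNIV"
    by (rule comp_summable[OF pmf_summable[of \<mu>]]) (use Snn Fle in \<open>auto intro: order.trans\<close>)
  have "infsum (\<lambda>x. infsum (F x) UNIV) UNIV = infsum (\<lambda>a. infsum (\<lambda>x. F x a) UNIV) UNIV"
    by (rule swap_nonneg(1)[OF Fnn Fsm S, symmetric])
  also have "\<dots> = infsum (\<lambda>a. min (P \<mu> a) (P \<nu> a)) UNIV"
    unfolding F_def by (subst blk_sum) auto
  also have "\<dots> = ov \<mu> \<nu>" using ovp[of \<mu> \<nu>] by (simp add: ov_def)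
  finally have tot: "infsum (\<lambda>x. infsum (F x) UNIV) UNIV = infsum (\<lambda>x. min (pmf \<mu> x) (pmf \<nu> x)) UNIV"
    by (simp add: ov_def)
  have "infsum (F x) UNIV = min (pmf \<mu> x) (pmf \<nu> x)"
    by (rule sum_eq_le_imp_eq[OF S min_summable]) (use Fle tot in auto)
  moreover have "F x = (\<lambda>a. min (blk \<mu> x a) (blk \<nu> x a))" by (simp add: F_def fun_eq_iff)
  ultimately show ?thesis by simp
qed

lemma F6: "pmf \<mu> x \<le> pmf \<nu> x \<Longrightarrow> blk \<mu> x a \<le> blk \<nu> x a"
proof -
  assume le: "pmf \<mu> x \<le> pmf \<nu> x"
  have sm: "(\<lambda>a. min (blk \<mu> x a) (blk \<nu> x a)) summable_on UNIV"
    by (rule comp_summable[OF blk_sm[of \<mu> x]]) (auto simp: blk_nn)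
  have "min (blk \<mu> x a) (blk \<nu> x a) = blk \<mu> x a"
    by (rule sum_eq_le_imp_eq[OF sm blk_sm]) (use le F5[of \<mu> x \<nu>] blk_mass[of \<mu> x] in auto)
  then show ?thesis by (metis min.cobounded2)
qed

end


context isoL
begin

definition M :: "'a \<Rightarrow> real \<Rightarrow> 'a pmf" where "M x t = (SOME \<mu>. pmf \<mu> x = t)"

lemma M_x: "0 \<le> t \<Longrightarrow> t \<le> 1 \<Longrightarrow> pmf (M x t) x = t"
proof -
  assume t: "0 \<le> t" "t \<le> 1"
  obtain y where "y \<noteq> x" using two by blast
  then show ?thesis unfolding M_def by (rule someI_ex[OF ex_pmf[OF _ t]])
qed

definition \<Phi>0 where "\<Phi>0 x t a = blk (M x t) x a"

lemma \<Phi>0_eq: "\<Phi>0 x (pmf \<mu> x) = blk \<mu> x"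
proof
  fix a
  have e: "pmf (M x (pmf \<mu> x)) x = pmf \<mu> x" by (rule M_x) (auto simp: pmf_le_1)
  show "\<Phi>0 x (pmf \<mu> x) a = blk \<mu> x a"
    unfolding \<Phi>0_def using F6[of "M x (pmf \<mu> x)" x \<mu> a] F6[of \<mu> x "M x (pmf \<mu> x)" a] e by simp
qed

lemma adm0: "admissible_family \<Phi>0"
  unfolding admissible_family_def
proof (intro conjI allI impI ballI)
  fix x and t :: real assume "t \<in> {0<..1}"
  show "finite_meas (\<Phi>0 x t)" unfolding finite_meas_def \<Phi>0_def
    using blk_nn blk_sm by blast
next
  fix x y :: 'a assume xy: "x \<noteq> y"
  show "supp (\<Phi>0 x 1) \<inter> supp (\<Phi>0 y 1) = {}"
  proof (rule ccontr)
    assume "supp (\<Phi>0 x 1) \<inter> supp (\<Phi>0 y 1) \<noteq> {}"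
    then obtain a where "\<Phi>0 x 1 a > 0" "\<Phi>0 y 1 a > 0" unfolding supp_eq by blast
    then have "P (\<delta> x) a > 0" "P (\<delta> y) a > 0" unfolding \<Phi>0_def blk_def by (auto split: if_splits)
    then show False using F1[OF xy, of a] by simp
  qed
next
  fix x and t :: real assume t: "t \<in> {0<..1}"
  show "meas (\<Phi>0 x t) UNIV = t"
    unfolding meas_def \<Phi>0_def using blk_mass[of "M x t" x] M_x[of t x] t
    by (simp add: fun_eq_iff)
next
  fix x and s t :: real assume st: "0 < s \<and> s < t \<and> t \<le> 1"
  show "meas_le (\<Phi>0 x s) (\<Phi>0 x t)"
    unfolding meas_le_def meas_def
  proof
    fix A
    have "pmf (M x s) x \<le> pmf (M x t) x" using M_x[of s x] M_x[of t x] st by simp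
    then show "infsum (\<Phi>0 x s) A \<le> infsum (\<Phi>0 x t) A"
      unfolding \<Phi>0_def using F6 by (intro infsum_mono) (auto intro: blk_sm simp: fun_eq_iff)
  qed
qed

lemma blk_zero: "pmf \<mu> x = 0 \<Longrightarrow> blk \<mu> x a = 0"
  by (rule nonneg_infsum_le_0D[where A=UNIV]) (use blk_mass[of \<mu> x] in \<open>auto simp: blk_nn blk_sm\<close>)

lemma gen0: "generates \<Phi>0 f"
  unfolding generates_def
proof (intro allI)
  fix \<mu> A
  have S: "(\<lambda>x. infsum (blk \<mu> x) UNIV) summable_on UNIV" unfolding blk_mass by (rule pmf_summable)
  have "(\<Sum>\<^sub>\<infinity>x\<in>{x. measure_pmf.prob \<mu> {x} > 0}. meas (\<Phi>0 x (measure_pmf.prob \<mu> {x})) A)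
      = (\<Sum>\<^sub>\<infinity>x\<in>{x. pmf \<mu> x > 0}. infsum (blk \<mu> x) A)"
    unfolding measure_pmf_single meas_def \<Phi>0_eq ..
  also have "\<dots> = (\<Sum>\<^sub>\<infinity>x. infsum (blk \<mu> x) A)"
  proof (rule infsum_cong_neutral)
    fix x assume "x \<in> UNIV - {x. pmf \<mu> x > 0}"
    then have "pmf \<mu> x = 0" using pmf_nonneg[of \<mu> x] by simp
    then have "blk \<mu> x = (\<lambda>_. 0)" by (intro ext blk_zero)
    then show "infsum (blk \<mu> x) A = 0" by simp
  qed auto
  also have "\<dots> = infsum (\<lambda>a. infsum (\<lambda>x. blk \<mu> x a) UNIV) A"
    by (rule swap_nonneg(1)[OF blk_nn blk_sm S, symmetric])
  also have "\<dots> = infsum (P \<mu>) A"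
    using blk_sum[where g="\<lambda>u v. u" and \<nu>=\<mu> and \<mu>=\<mu>] by simp
  also have "\<dots> = measure_pmf.prob (f \<mu>) A" by (simp add: prob_infsum)
  finally show "measure_pmf.prob (f \<mu>) A =
      (\<Sum>\<^sub>\<infinity>x\<in>{x. measure_pmf.prob \<mu> {x} > 0}. meas (\<Phi>0 x (measure_pmf.prob \<mu> {x})) A)" by simp
qed

end

theorem theorem2p3:
  fixes p :: real
  assumes "p > 0"
    and "\<exists>x y :: 'a :: countable. x \<noteq> y"
  shows "(\<forall>f :: 'a pmf \<Rightarrow> 'a pmf. isometric_embedding p f \<longrightarrow>
            (\<exists>\<Phi>. admissible_family \<Phi> \<and> generates \<Phi> f \<and>
               (\<forall>\<Psi>. admissible_family \<Psi> \<and> generates \<Psi> f \<longrightarrow>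
                  (\<forall>x. \<forall>t\<in>{0<..1}. \<Psi> x t = \<Phi> x t))))
       \<and> (\<forall>\<Phi> :: 'a \<Rightarrow> real \<Rightarrow> 'a \<Rightarrow> real. admissible_family \<Phi> \<longrightarrow>
            (\<exists>f. generates \<Phi> f \<and> isometric_embedding p f))"
proof (intro conjI allI impI)
  have two': "\<exists>y. y \<noteq> x" for x :: 'a using assms(2) by metis
  fix f :: "'a pmf \<Rightarrow> 'a pmf"
  assume "isometric_embedding p f"
  then have ovp: "\<And>\<mu> \<nu>. ov (f \<mu>) (f \<nu>) = ov \<mu> \<nu>" using iso_iff[OF assms(1)] by blast
  interpret isoL f by standard (use ovp two' in auto)
  show "\<exists>\<Phi>. admissible_family \<Phi> \<and> generates \<Phi> f \<and>
               (\<forall>\<Psi>. admissible_family \<Psi> \<and> generates \<Psi> f \<longrightarrow>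
                  (\<forall>x. \<forall>t\<in>{0<..1}. \<Psi> x t = \<Phi> x t))"
  proof (intro exI conjI allI impI ballI)
    show "admissible_family \<Phi>0" by (rule adm0)
    show "generates \<Phi>0 f" by (rule gen0)
    fix \<Psi> :: "'a \<Rightarrow> real \<Rightarrow> 'a \<Rightarrow> real" and x :: 'a and t :: real
    assume \<Psi>: "admissible_family \<Psi> \<and> generates \<Psi> f" and t: "t \<in> {0<..1}"
    obtain y where y: "y \<noteq> x" using two' by blast
    interpret A1: adm \<Psi> by standard (use \<Psi> in auto)
    interpret A2: adm \<Phi>0 by standard (rule adm0)
    show "\<Psi> x t = \<Phi>0 x t"
    proof
      fix a
      show "\<Psi> x t a = \<Phi>0 x t a"
        using A1.uniq_formula[of f y x t a] A2.uniq_formula[OF gen0 y, of t a] \<Psi> y t by simp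
    qed
  qed
next
  fix \<Phi> :: "'a \<Rightarrow> real \<Rightarrow> 'a \<Rightarrow> real"
  assume "admissible_family \<Phi>"
  then show "\<exists>f. generates \<Phi> f \<and> isometric_embedding p f" by (rule converse[OF assms(1)])
qed

end
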